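(* Let $\alpha\in(0,2)$, $c>0$, $a>0$, and let $\{G^{\alpha,c,a}(s):s\ge0\}$ be the centered Gaussian process with covariance $\mathrm{Cov}(G^{\alpha,c,a}(s),G^{\alpha,c,a}(r))=\frac12\big(f^{\alpha,c,a}(s)+f^{\alpha,c,a}(r)-f^{\alpha,c,a}(|s-r|)\big)$. Then for fixed $s,r>0$, $$\mathrm{Cov}\big(G^{\alpha,c,a}(s)-G^{\alpha,c,a}(0),\,G^{\alpha,c,a}(r+s+u)-G^{\alpha,c,a}(s+u)\big)\sim k\,u^{-(\alpha+1)}\quad\text{as }u\to\infty,$$ where $k$ is a constant depending on $\alpha,c,a,s,r$.
   Context: Define $f^{\alpha,c,a}(0)=0$ and for $s>0$, $f^{\alpha,c,a}(s)=\frac{4s}{a\pi}\int_0^\infty\frac{\sin^2(u/2)}{u^2}(1-e^{-2c(u/s)^\alpha})\,\mathrm{d}u$. For functions $g,h$, $g\sim h$ means $g/h\to1$. *)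

theory Defs
  imports "HOL-Analysis.Analysis" "HOL-Library.Landau_Symbols"
begin

definition fACA :: "real \<Rightarrow> real \<Rightarrow> real \<Rightarrow> real \<Rightarrow> real" where
  "fACA \<alpha> c a s =
     (if s = 0 then 0
      else 4 * s / (a * pi) *
        (LBINT u:{0<..}. (sin (u / 2))\<^sup>2 / u\<^sup>2 * (1 - exp (- 2 * c * (u / s) powr \<alpha>))))"

definition covG :: "real \<Rightarrow> real \<Rightarrow> real \<Rightarrow> real \<Rightarrow> real \<Rightarrow> real" where
  "covG \<alpha> c a s r = (fACA \<alpha> c a s + fACA \<alpha> c a r - fACA \<alpha> c a \<bar>s - r\<bar>) / 2"

end

theory Submission
  imports Defs "HOL-Complex_Analysis.Complex_Analysis" "HOL-Real_Asymp.Real_Asymp"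
begin

lemma one_minus_cos_le: "1 - cos (x::real) \<le> x\<^sup>2 / 2"
proof -
  have "cos x = 1 - 2 * sin (x/2) ^ 2" using cos_double_sin[of "x/2"] by simp
  moreover have "\<bar>sin (x/2)\<bar> \<le> \<bar>x/2\<bar>" by (rule abs_sin_x_le_abs_x)
  then have "sin (x/2) ^ 2 \<le> (x/2)^2" by (metis power2_abs power_mono abs_ge_zero)
  ultimately show ?thesis by (simp add: power2_eq_square)
qed

lemma exp_minus_one_le:
  fixes w :: complex assumes "Re w \<le> 0"
  shows "norm (exp w - 1) \<le> norm w"
proof -
  define a where "a = Re w" define b where "b = Im w"
  have e: "exp w = exp a * cis b" using a_def b_def
    by (metis complex_eq exp_add exp_of_real cis_conv_exp mult.commute)
  have "(norm (exp w - 1))\<^sup>2 = (exp a * cos b - 1)\<^sup>2 + (exp a * sin b)\<^sup>2"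
    by (simp add: e cmod_power2)
  also have "\<dots> = (exp a - 1)\<^sup>2 + 2 * exp a * (1 - cos b)"
  proof -
    have h: "(exp a)\<^sup>2 * (cos b)\<^sup>2 + (exp a)\<^sup>2 * (sin b)\<^sup>2 = (exp a)\<^sup>2"
    proof -
      have "(exp a)\<^sup>2 * ((cos b)\<^sup>2 + (sin b)\<^sup>2) = (exp a)\<^sup>2" by simp
      then show ?thesis by (simp only: distrib_left)
    qed
    have "(exp a * cos b - 1)\<^sup>2 + (exp a * sin b)\<^sup>2 = (exp a)\<^sup>2 * (cos b)\<^sup>2 + (exp a)\<^sup>2 * (sin b)\<^sup>2 - 2 * exp a * cos b + 1"
      by (simp add: power2_diff power_mult_distrib)
    also have "\<dots> = (exp a)\<^sup>2 - 2 * exp a * cos b + 1"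
      using h by simp
    finally show ?thesis by (simp add: power2_eq_square algebra_simps)
  qed
  also have "\<dots> \<le> a\<^sup>2 + b\<^sup>2"
  proof -
    have "a \<le> 0" using assms a_def by simp
    have "0 \<le> 1 - exp a" using \<open>a \<le> 0\<close> by simp
    moreover have "1 - exp a \<le> - a" using exp_ge_add_one_self[of a] by linarith
    ultimately have "(1 - exp a)\<^sup>2 \<le> (- a)\<^sup>2" by (intro power_mono) auto
    then have 1: "(exp a - 1)\<^sup>2 \<le> a\<^sup>2" by (simp add: power2_commute)
    have "exp a \<le> 1" using \<open>a \<le> 0\<close> by simp
    moreover have "0 \<le> 1 - cos b" by simp
    ultimately have "exp a * (1 - cos b) \<le> 1 * (1 - cos b)"
      by (intro mult_right_mono) auto
    then have "2 * exp a * (1 - cos b) \<le> 2 * (1 - cos b)" by simp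
    also have "\<dots> \<le> b\<^sup>2" using one_minus_cos_le[of b] by simp
    finally show ?thesis using 1 by simp
  qed
  also have "\<dots> = (norm w)\<^sup>2" by (simp add: a_def b_def cmod_power2)
  finally show ?thesis by (simp add: power2_le_iff_abs_le)
qed

definition E1 :: "complex \<Rightarrow> complex" where
  "E1 w = (if w = 0 then 1 else (exp w - 1) / w)"

lemma E1_eq: "exp w - 1 = w * E1 w"
  by (simp add: E1_def)

lemma E1_bound: "Re w \<le> 0 \<Longrightarrow> norm (E1 w) \<le> 1"
  using exp_minus_one_le[of w] by (auto simp: E1_def norm_divide divide_le_eq)

lemma E1_isCont: "isCont E1 w"
proof (cases "w = 0")
  case True
  have "((\<lambda>y. (exp y - exp 0) / (y - 0)) \<longlongrightarrow> (1::complex)) (at 0)"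
    using DERIV_exp[of "0::complex"] by (simp add: has_field_derivative_iff)
  then have "((\<lambda>y. (exp y - 1) / y) \<longlongrightarrow> (1::complex)) (at 0)" by simp
  then have "(E1 \<longlongrightarrow> 1) (at 0)"
    by (rule Lim_transform_eventually) (auto simp: E1_def eventually_at_filter)
  then show ?thesis using True by (simp add: isCont_def E1_def)
next
  case False
  have "isCont (\<lambda>y. (exp y - 1) / y) w" using False by (intro continuous_intros) auto
  moreover have "eventually (\<lambda>y. E1 y = (exp y - 1) / y) (nhds w)"
    using eventually_nhds_in_open[of "-{0}" w] False by (auto elim!: eventually_mono simp: E1_def)
  ultimately show ?thesis using isCont_cong[of E1 "\<lambda>y. (exp y - 1) / y" w] by simp
qed

lemma E1_differentiable: "w \<noteq> 0 \<Longrightarrow> E1 field_differentiable (at w)"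
proof -
  assume w: "w \<noteq> 0"
  have d: "(\<lambda>y. (exp y - 1) / y) field_differentiable (at w)"
    using w by (intro derivative_intros field_differentiable_within_exp) auto
  show ?thesis
    by (rule field_differentiable_transform_within[where d="norm w" and S=UNIV, OF _ _ _ d])
      (use w in \<open>auto simp: dist_norm E1_def\<close>)
qed

definition quad :: "complex set" where "quad = {z. 0 \<le> Re z \<and> 0 \<le> Im z}"

lemma convex_quad: "convex quad"
proof -
  have "quad = {z. Re z \<ge> 0} \<inter> {z. Im z \<ge> 0}" by (auto simp: quad_def)
  then show ?thesis using convex_Int[OF convex_halfspace_Re_ge[of 0] convex_halfspace_Im_ge[of 0]] by simp
qed

lemma interior_quad: assumes "x \<in> interior quad" shows "0 < Re x" "0 < Im x"
proof -
  from assms obtain e where e: "e > 0" "ball x e \<subseteq> quad" by (meson mem_interior)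
  have "x - of_real (e/2) \<in> ball x e" using e by (simp add: dist_norm)
  then have "x - of_real (e/2) \<in> quad" using e by blast
  then have "0 \<le> Re x - e/2" by (auto simp: quad_def)
  then show "0 < Re x" using e by simp
  have "x - \<i> * of_real (e/2) \<in> ball x e" using e by (simp add: dist_norm norm_mult)
  then have "x - \<i> * of_real (e/2) \<in> quad" using e by blast
  then have "0 \<le> Im x - e/2" by (auto simp: quad_def)
  then show "0 < Im x" using e by simp
qed

lemma cis_quad: "0 \<le> x \<Longrightarrow> 0 \<le> \<phi> \<Longrightarrow> \<phi> \<le> pi/2 \<Longrightarrow> complex_of_real x * cis \<phi> \<in> quad"
  by (auto simp: quad_def intro!: mult_nonneg_nonneg cos_ge_zero sin_ge_zero)

lemma image_div_01: assumes R: "(0::real) < R" shows "(\<lambda>x. x / R) ` {0..R} = {0..1}"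
proof
  show "(\<lambda>x. x / R) ` {0..R} \<subseteq> {0..1}" using R by auto
  show "{0..1} \<subseteq> (\<lambda>x. x / R) ` {0..R}"
  proof
    fix y :: real assume "y \<in> {0..1}"
    then show "y \<in> (\<lambda>x. x / R) ` {0..R}"
      using R by (intro image_eqI[of _ _ "y * R"]) (auto simp: mult_le_cancel_right1)
  qed
qed

lemma line_integral:
  fixes F :: "complex \<Rightarrow> complex"
  assumes R: "0 < R" and c: "continuous_on {0..R} (\<lambda>x. F (of_real x * w))"
  shows "(F has_contour_integral (w * integral {0..R} (\<lambda>x. F (of_real x * w)))) (linepath 0 (of_real R * w))"
proof -
  let ?g = "\<lambda>x. F (of_real x * w)"
  have "(?g has_integral integral {0..R} ?g) {0..R}"
    using c by (intro integrable_integral integrable_continuous_real)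
  from has_integral_stretch_real[OF this, of R] R
  have "((\<lambda>x. ?g (R * x)) has_integral (1 / R) *\<^sub>R integral {0..R} ?g) {0..1}"
    by (simp add: image_div_01)
  from has_integral_mult_left[OF this, of "of_real R * w"]
  have "((\<lambda>x. ?g (R * x) * (of_real R * w)) has_integral (w * integral {0..R} ?g)) {0..1}"
    using R by (simp add: scaleR_conv_of_real field_simps)
  then show ?thesis
    by (simp add: has_contour_integral_linepath scaleR_conv_of_real mult.assoc mult.left_commute)
qed

lemma sector:
  fixes F :: "complex \<Rightarrow> complex" and M :: "real \<Rightarrow> real" and t1 t2 :: real
  assumes cont: "continuous_on quad F"
    and holo: "\<And>z. 0 < Re z \<Longrightarrow> 0 < Im z \<Longrightarrow> F field_differentiable (at z)"
    and t: "0 \<le> t1" "t1 \<le> t2" "t2 \<le> pi/2"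
    and M: "\<And>R \<phi>. 1 \<le> R \<Longrightarrow> t1 \<le> \<phi> \<Longrightarrow> \<phi> \<le> t2 \<Longrightarrow> norm (F (of_real R * cis \<phi>)) \<le> M R"
    and Mlim: "((\<lambda>R. R * M R) \<longlongrightarrow> 0) at_top"
    and i1: "set_integrable lborel {0..} (\<lambda>x. F (of_real x * cis t1))"
    and i2: "set_integrable lborel {0..} (\<lambda>x. F (of_real x * cis t2))"
  shows "cis t1 * (LBINT x:{0..}. F (of_real x * cis t1)) = cis t2 * (LBINT x:{0..}. F (of_real x * cis t2))"
proof -
  have rayc: "continuous_on {0..} (\<lambda>x. F (of_real x * cis \<phi>))" if "0 \<le> \<phi>" "\<phi> \<le> pi/2" for \<phi>
    by (rule continuous_on_compose2[OF cont]) (use that cis_quad in \<open>auto intro!: continuous_intros\<close>)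
  define J where "J \<phi> R = integral {0..R} (\<lambda>x. F (of_real x * cis \<phi>))" for \<phi> R
  have key: "norm (cis t1 * J t1 R - cis t2 * J t2 R) \<le> M R * R * (t2 - t1)" if R: "1 \<le> R" for R
  proof -
    let ?g1 = "linepath 0 (of_real R * cis t1)"
    let ?g2 = "part_circlepath 0 R t1 t2"
    let ?g3 = "linepath (of_real R * cis t2) 0"
    have h1: "(F has_contour_integral (cis t1 * J t1 R)) ?g1"
      unfolding J_def using R t by (intro line_integral continuous_on_subset[OF rayc]) auto
    have h3': "(F has_contour_integral (cis t2 * J t2 R)) (linepath 0 (of_real R * cis t2))"
      unfolding J_def using R t by (intro line_integral continuous_on_subset[OF rayc]) auto
    have h3: "(F has_contour_integral (- (cis t2 * J t2 R))) ?g3"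
      using has_contour_integral_reversepath[OF valid_path_linepath h3'] by simp
    have pim2: "path_image ?g2 \<subseteq> quad"
      using t R by (auto simp: path_image_part_circlepath' closed_segment_eq_real_ivl intro!: cis_quad)
    have "F contour_integrable_on ?g2"
      by (rule contour_integrable_continuous_part_circlepath[OF continuous_on_subset[OF cont pim2]])
    then obtain A where h2: "(F has_contour_integral A) ?g2" by (auto simp: contour_integrable_on_def)
    have M0: "0 \<le> M R" using M[of R t1] R t by (meson norm_ge_zero order_trans order_refl)
    have Abound: "norm A \<le> M R * R * (t2 - t1)"
    proof (rule has_contour_integral_bound_part_circlepath[OF h2 M0])
      show "0 < R" using R by simp
      show "t1 \<le> t2" using t by simp
      fix x assume "x \<in> path_image ?g2"
      then obtain \<phi> where "\<phi> \<in> {t1..t2}" "x = of_real R * cis \<phi>"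
        by (auto simp: path_image_part_circlepath' closed_segment_eq_real_ivl t)
      then show "norm (F x) \<le> M R" using M[of R \<phi>] R by auto
    qed
    have j: "(F has_contour_integral (cis t1 * J t1 R + (A + - (cis t2 * J t2 R)))) (?g1 +++ (?g2 +++ ?g3))"
      by (intro has_contour_integral_join h1 h2 h3 valid_path_join) (auto simp: cis_conv_exp)
    have pim: "path_image (?g1 +++ (?g2 +++ ?g3)) \<subseteq> quad"
    proof -
      have "closed_segment 0 (of_real R * cis t1) \<subseteq> quad"
        using t R by (intro closed_segment_subset convex_quad cis_quad[of 0 t1, simplified] cis_quad) auto
      moreover have "closed_segment (of_real R * cis t2) 0 \<subseteq> quad"
        using t R by (intro closed_segment_subset convex_quad cis_quad[of 0 t1, simplified] cis_quad) auto
      ultimately show ?thesis using pim2 path_image_join_subset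
        by (smt (verit, ccfv_threshold) Un_subset_iff path_image_linepath subset_trans)
    qed
    have "(F has_contour_integral 0) (?g1 +++ (?g2 +++ ?g3))"
    proof (rule Cauchy_theorem_convex[OF cont convex_quad, of "{}"])
      show "\<And>x. x \<in> interior quad - {} \<Longrightarrow> F field_differentiable at x"
        using holo interior_quad by blast
      show "valid_path (?g1 +++ (?g2 +++ ?g3))"
        by (intro valid_path_join valid_path_linepath valid_path_part_circlepath) (auto simp: cis_conv_exp)
    qed (use pim in auto)
    with j have "cis t1 * J t1 R + (A + - (cis t2 * J t2 R)) = 0"
      using has_contour_integral_unique by blast
    then have "cis t1 * J t1 R - cis t2 * J t2 R = - A" by (simp add: algebra_simps)
    then show ?thesis using Abound by simp
  qed
  have lim: "(\<lambda>n. J \<phi> (real n)) \<longlonglongrightarrow> (LBINT x:{0..}. F (of_real x * cis \<phi>))"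
    if i: "set_integrable lborel {0..} (\<lambda>x. F (of_real x * cis \<phi>))" for \<phi>
  proof -
    have u: "(\<Union>n. {0..real n}) = {0..}"
      by (auto intro: real_arch_simple)
    have "(\<lambda>n. LINT x:{0..real n}|lborel. F (of_real x * cis \<phi>)) \<longlonglongrightarrow> (LINT x:(\<Union>n. {0..real n})|lborel. F (of_real x * cis \<phi>))"
      by (rule set_integral_cont_up) (auto simp: incseq_def u i)
    moreover have "(LINT x:{0..real n}|lborel. F (of_real x * cis \<phi>)) = J \<phi> (real n)" for n
      unfolding J_def by (rule set_borel_integral_eq_integral(2)[OF set_integrable_subset[OF i]]) auto
    ultimately show ?thesis using u by simp
  qed
  have l2: "(\<lambda>n. cis t1 * J t1 (real n) - cis t2 * J t2 (real n)) \<longlonglongrightarrow>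
      cis t1 * (LBINT x:{0..}. F (of_real x * cis t1)) - cis t2 * (LBINT x:{0..}. F (of_real x * cis t2))"
    by (intro tendsto_intros lim i1 i2)
  have Mn: "(\<lambda>n. M (real n) * real n * (t2 - t1)) \<longlonglongrightarrow> 0"
  proof -
    have "(\<lambda>n. real n * M (real n)) \<longlonglongrightarrow> 0"
      by (rule filterlim_compose[OF Mlim filterlim_real_sequentially])
    from tendsto_mult_right_zero[OF this, of "t2 - t1"] show ?thesis by (simp add: mult_ac)
  qed
  have l0: "(\<lambda>n. cis t1 * J t1 (real n) - cis t2 * J t2 (real n)) \<longlonglongrightarrow> 0"
  proof (rule Lim_null_comparison[OF _ Mn])
    show "\<forall>\<^sub>F n in sequentially. norm (cis t1 * J t1 (real n) - cis t2 * J t2 (real n)) \<le> M (real n) * real n * (t2 - t1)"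
      using eventually_ge_at_top[of "1::nat"] by eventually_elim (rule key, simp)
  qed
  from LIMSEQ_unique[OF l2 l0] show ?thesis by simp
qed

lemma int_bound:
  fixes g :: "real \<Rightarrow> 'b::{banach, second_countable_topology}" and h :: "real \<Rightarrow> real"
  assumes A: "A \<in> sets borel" and c: "continuous_on A g"
    and b: "\<And>x. x \<in> A \<Longrightarrow> x \<noteq> 0 \<Longrightarrow> norm (g x) \<le> h x"
    and h: "set_integrable lborel A h"
  shows "set_integrable lborel A g"
proof (rule set_integrable_bound[OF h])
  show "set_borel_measurable lborel A g"
    unfolding set_borel_measurable_def
    using borel_measurable_continuous_on_indicator[OF A c] by simp
  show "AE x in lborel. x \<in> A \<longrightarrow> norm (g x) \<le> norm (h x)"
    using AE_lborel_singleton[of 0]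
  proof eventually_elim
    case (elim x)
    then show ?case using b[of x] by auto
  qed
qed

lemma maj_cauchy: "set_integrable lborel {0..} (\<lambda>x::real. 1 / (1 + x\<^sup>2))"
proof -
  have "(\<integral>\<^sup>+x. ennreal (1 / (1 + x\<^sup>2)) * indicator {0..} x \<partial>lborel) = ennreal (pi/2 - arctan 0)"
  proof (rule nn_integral_FTC_atLeast)
    show "(\<lambda>x::real. 1 / (1 + x\<^sup>2)) \<in> borel_measurable borel" by measurable
    show "DERIV arctan x :> 1 / (1 + x\<^sup>2)" for x
      using DERIV_arctan[of x] by (simp add: divide_inverse)
    show "0 \<le> 1 / (1 + x\<^sup>2)" for x :: real by (simp add: add_pos_nonneg)
    show "(arctan \<longlongrightarrow> pi / 2) at_top" by (rule tendsto_arctan_at_top)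
  qed
  then have *: "(\<integral>\<^sup>+x. ennreal (indicator {0..} x *\<^sub>R (1 / (1 + x\<^sup>2))) \<partial>lborel) = ennreal (pi/2)"
    by (subst nn_integral_cong[where v="\<lambda>x. ennreal (1 / (1 + x\<^sup>2)) * indicator {0..} x"])
       (auto split: split_indicator)
  show ?thesis
    unfolding set_integrable_def
    by (rule integrableI_nn_integral_finite[OF _ _ *]) (auto simp: add_pos_nonneg)
qed

lemma maj_gamma:
  fixes b \<beta> :: real assumes b: "0 < b" and \<beta>: "0 \<le> \<beta>"
  shows "set_integrable lborel {0..} (\<lambda>x. x powr \<beta> * exp (- (b * x)))"
proof -
  have "(\<lambda>t. complex_of_real t powr (complex_of_real (\<beta> + 1) - 1) / of_real (exp (b * t)))
          absolutely_integrable_on {0<..}"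
    by (rule absolutely_integrable_Gamma_integral) (use b \<beta> in auto)
  from absolutely_integrable_norm[OF this]
  have i: "integrable lebesgue (\<lambda>t. indicator {0<..} t *\<^sub>R norm (complex_of_real t powr (complex_of_real (\<beta> + 1) - 1) / of_real (exp (b * t))))"
    by (simp add: o_def set_integrable_def)
  have eq: "norm (complex_of_real t powr complex_of_real \<beta> / of_real (exp (b * t)))
      = t powr \<beta> * exp (- (b * t))" if "0 < t" for t
  proof -
    have 1: "norm (complex_of_real t powr of_real \<beta>) = t powr \<beta>" using that by (simp add: norm_powr_real_powr)
    have 2: "norm (complex_of_real (exp (b*t))) = exp (b*t)" by simp
    show ?thesis unfolding norm_divide 1 2 by (simp add: exp_minus divide_inverse)
  qed
  have "integrable lebesgue (\<lambda>t. indicator {0<..} t *\<^sub>R (t powr \<beta> * exp (- (b * t))))"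
    using i by (rule Bochner_Integration.integrable_cong[OF refl, THEN iffD1, rotated]) (auto simp: eq split: split_indicator)
  then have "integrable lborel (\<lambda>t. indicator {0<..} t *\<^sub>R (t powr \<beta> * exp (- (b * t))))"
    by (subst (asm) integrable_completion) auto
  moreover have eqf: "(\<lambda>t::real. indicator {0<..} t *\<^sub>R (t powr \<beta> * exp (- (b * t)))) = (\<lambda>t. indicator {0..} t *\<^sub>R (t powr \<beta> * exp (- (b * t))))"
    by (rule ext) (auto split: split_indicator)
  ultimately show ?thesis unfolding set_integrable_def by (simp only: eqf)
qed

lemma polar_powr:
  fixes R \<phi> \<alpha> :: real
  assumes "0 < R" "-pi < \<phi>" "\<phi> \<le> pi"
  shows "(complex_of_real R * cis \<phi>) powr (of_real \<alpha>) = of_real (R powr \<alpha>) * cis (\<alpha> * \<phi>)"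
proof -
  have e: "complex_of_real R * cis \<phi> = exp (of_real (ln R) + \<i> * of_real \<phi>)"
    using assms by (simp add: exp_add cis_conv_exp exp_of_real)
  have l: "ln (complex_of_real R * cis \<phi>) = of_real (ln R) + \<i> * of_real \<phi>"
    unfolding e using assms by (intro Ln_exp) auto
  have "(complex_of_real R * cis \<phi>) powr (of_real \<alpha>) = exp (of_real \<alpha> * (of_real (ln R) + \<i> * of_real \<phi>))"
    using assms by (simp add: powr_def l)
  also have "\<dots> = exp (of_real (\<alpha> * ln R)) * exp (\<i> * of_real (\<alpha> * \<phi>))"
    by (simp add: algebra_simps exp_add)
  also have "\<dots> = of_real (R powr \<alpha>) * cis (\<alpha> * \<phi>)"
    using assms by (simp add: cis_conv_exp powr_def flip: exp_of_real of_real_mult)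
  finally show ?thesis .
qed

lemma polar_powr0:
  fixes R \<phi> \<alpha> :: real
  assumes "0 \<le> R" "-pi < \<phi>" "\<phi> \<le> pi" "0 < \<alpha>"
  shows "(complex_of_real R * cis \<phi>) powr (of_real \<alpha>) = of_real (R powr \<alpha>) * cis (\<alpha> * \<phi>)"
  using polar_powr[of R \<phi> \<alpha>] assms by (cases "R = 0") auto

lemma sector_powr_Re:
  fixes R \<phi> \<alpha> :: real
  assumes "0 \<le> R" "0 \<le> \<phi>" "\<phi> \<le> pi" "0 < \<alpha>" "\<alpha> * \<phi> \<le> pi / 2"
  shows "0 \<le> Re ((complex_of_real R * cis \<phi>) powr (of_real \<alpha>))"
proof -
  have "0 \<le> \<alpha> * \<phi>" using assms by simp
  then have "0 \<le> cos (\<alpha> * \<phi>)" using assms pi_gt_zero by (intro cos_ge_zero) linarith+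
  moreover have "-pi < \<phi>" using assms pi_gt_zero by linarith
  ultimately show ?thesis using assms by (subst polar_powr0) auto
qed

lemma sector_powr_norm:
  fixes R \<phi> \<alpha> :: real
  assumes "0 \<le> R"
  shows "norm ((complex_of_real R * cis \<phi>) powr (of_real \<alpha>)) = R powr \<alpha>"
  using assms by (simp add: norm_powr_real_powr' norm_mult)

definition Pf :: "real \<Rightarrow> real \<Rightarrow> complex \<Rightarrow> complex" where
  "Pf r s z = - complex_of_real (r * s) * E1 (\<i> * of_real r * z) * E1 (\<i> * of_real s * z)"

definition Fu :: "real \<Rightarrow> real \<Rightarrow> real \<Rightarrow> real \<Rightarrow> real \<Rightarrow> complex \<Rightarrow> complex" where
  "Fu \<alpha> c r s u z = exp (\<i> * of_real u * z) * Pf r s z * (1 - exp (- (2 * of_real c * z powr of_real \<alpha>)))"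

definition F2 :: "real \<Rightarrow> complex \<Rightarrow> complex" where
  "F2 \<alpha> z = exp (\<i> * z) * z powr of_real \<alpha>"

definition U :: "complex set" where "U = {z. 0 < Re z \<and> 0 < Im z}"

lemma open_U: "open U"
  unfolding U_def by (intro open_Collect_conj open_Collect_less continuous_intros)

lemma U_not_nonpos: "z \<in> U \<Longrightarrow> z \<notin> \<real>\<^sub>\<le>\<^sub>0"
  by (auto simp: U_def complex_nonpos_Reals_iff)

lemma E1_cont_on: "continuous_on UNIV E1"
  by (simp add: E1_isCont continuous_at_imp_continuous_on)

lemma E1_holo: assumes "k \<noteq> 0" "0 \<notin> S" shows "(\<lambda>z. E1 (k * z)) holomorphic_on S"
  unfolding holomorphic_on_def
proof
  fix z assume "z \<in> S"
  then have "z \<noteq> 0" using assms by auto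
  have "(E1 \<circ> (\<lambda>z. k * z)) field_differentiable at z"
    by (rule field_differentiable_compose) (use assms \<open>z \<noteq> 0\<close> in \<open>auto intro!: derivative_intros E1_differentiable\<close>)
  then show "(\<lambda>z. E1 (k * z)) field_differentiable at z within S"
    by (simp add: o_def field_differentiable_at_within)
qed

lemma Pf_cont: "continuous_on UNIV (Pf r s)"
proof -
  have c1: "continuous_on UNIV (\<lambda>z. E1 (\<i> * of_real r * z))"
    by (rule continuous_on_compose2[OF E1_cont_on]) (auto intro!: continuous_intros)
  have c2: "continuous_on UNIV (\<lambda>z. E1 (\<i> * of_real s * z))"
    by (rule continuous_on_compose2[OF E1_cont_on]) (auto intro!: continuous_intros)
  show ?thesis unfolding Pf_def
    by (intro continuous_intros c1 c2)
qed

lemma Pf_cont': "continuous_on UNIV (\<lambda>z. Pf r s z)"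
  by (rule Pf_cont)

lemma Pf_holo: assumes "0 < r" "0 < s" shows "Pf r s holomorphic_on U"
proof -
  have "0 \<notin> U" by (simp add: U_def)
  have h: "(\<lambda>z. E1 (k * z)) holomorphic_on U" if "k \<noteq> 0" for k
    using E1_holo[OF that \<open>0 \<notin> U\<close>] .
  have "(\<lambda>z. - complex_of_real (r * s) * E1 ((\<i> * of_real r) * z) * E1 ((\<i> * of_real s) * z)) holomorphic_on U"
    using assms by (intro holomorphic_intros h) auto
  then show ?thesis unfolding Pf_def by (simp add: mult.assoc)
qed

lemma Pf_0: "Pf r s 0 = - of_real (r * s)"
  by (simp add: Pf_def E1_def)

lemma Pf_bound1:
  assumes "0 \<le> Im z" "0 \<le> r" "0 \<le> s" shows "norm (Pf r s z) \<le> r * s"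
proof -
  have "norm (E1 (\<i> * of_real r * z)) \<le> 1" using assms by (intro E1_bound) (simp add: mult_nonneg_nonneg)
  moreover have "norm (E1 (\<i> * of_real s * z)) \<le> 1" using assms by (intro E1_bound) (simp add: mult_nonneg_nonneg)
  ultimately have "(r * s) * (norm (E1 (\<i> * of_real r * z)) * norm (E1 (\<i> * of_real s * z))) \<le> (r * s) * 1"
    using assms by (intro mult_left_mono mult_le_one) auto
  moreover have "norm (Pf r s z) = (r * s) * (norm (E1 (\<i> * of_real r * z)) * norm (E1 (\<i> * of_real s * z)))"
    using assms unfolding Pf_def norm_mult by (simp add: abs_mult norm_mult)
  ultimately show ?thesis by simp
qed

lemma Pf_eq:
  assumes "z \<noteq> 0"
  shows "Pf r s z = (exp (\<i> * of_real r * z) - 1) * (exp (\<i> * of_real s * z) - 1) / z\<^sup>2"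
  using assms unfolding E1_eq Pf_def by (simp add: field_simps power2_eq_square)

lemma norm_exp_i_le:
  assumes "0 \<le> Im z" "0 \<le> r" shows "norm (exp (\<i> * of_real r * z)) \<le> 1"
  using assms by (simp add: mult_nonneg_nonneg)

lemma Pf_bound2:
  assumes "0 \<le> Im z" "z \<noteq> 0" "0 \<le> r" "0 \<le> s" shows "norm (Pf r s z) \<le> 4 / (norm z)\<^sup>2"
proof -
  have a: "norm (exp (\<i> * of_real r * z) - 1) \<le> 2"
    using norm_triangle_ineq4[of "exp (\<i> * of_real r * z)" 1] norm_exp_i_le[of z r] assms by (simp del: norm_exp_eq_Re)
  have b: "norm (exp (\<i> * of_real s * z) - 1) \<le> 2"
    using norm_triangle_ineq4[of "exp (\<i> * of_real s * z)" 1] norm_exp_i_le[of z s] assms by (simp del: norm_exp_eq_Re)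
  have "norm (exp (\<i> * of_real r * z) - 1) * norm (exp (\<i> * of_real s * z) - 1) \<le> 2 * 2"
    using a b by (intro mult_mono) auto
  then show ?thesis using assms
    by (simp add: Pf_eq norm_divide norm_mult norm_power divide_right_mono)
qed

lemma Pf_bound3:
  assumes "0 \<le> Im z" "0 \<le> r" "0 \<le> s"
  shows "norm (Pf r s z) \<le> (r * s + 4) / (1 + (norm z)\<^sup>2)"
proof (cases "z = 0")
  case True then show ?thesis using Pf_bound1[OF assms] by simp
next
  case False
  have 1: "norm (Pf r s z) \<le> r * s" using Pf_bound1[OF assms] .
  have 2: "norm (Pf r s z) * (norm z)\<^sup>2 \<le> 4"
    using Pf_bound2[OF assms(1) False assms(2,3)] False by (simp add: field_simps)
  have "norm (Pf r s z) * (1 + (norm z)\<^sup>2) \<le> r * s + 4" using 1 2 by (simp add: algebra_simps)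
  then show ?thesis by (simp add: field_simps add_pos_nonneg)
qed

lemma one_minus_exp_le2:
  assumes "0 \<le> Re w" shows "norm (1 - exp (- w)) \<le> 2"
proof -
  have "norm (1 - exp (- w)) \<le> norm (1::complex) + norm (exp (- w))" by (rule norm_triangle_ineq4)
  also have "\<dots> \<le> 2" using assms by simp
  finally show ?thesis .
qed

lemma Fu_bound_sector:
  assumes "0 < \<alpha>" "\<alpha> < 2" "0 \<le> c" "0 \<le> r" "0 \<le> s" "0 \<le> u" "0 \<le> \<rho>" "0 \<le> \<phi>" "\<phi> \<le> pi/8"
  shows "norm (Fu \<alpha> c r s u (of_real \<rho> * cis \<phi>)) \<le> exp (- (u * \<rho> * sin \<phi>)) * 2 * norm (Pf r s (of_real \<rho> * cis \<phi>))"
proof -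
  let ?z = "complex_of_real \<rho> * cis \<phi>"
  have "\<alpha> * \<phi> \<le> 2 * (pi/8)" using assms by (intro mult_mono) auto
  then have "0 \<le> Re (?z powr of_real \<alpha>)" using assms by (intro sector_powr_Re) auto
  then have "norm (1 - exp (- (2 * of_real c * ?z powr of_real \<alpha>))) \<le> 2"
    using assms by (intro one_minus_exp_le2) simp
  moreover have e: "norm (exp (\<i> * of_real u * ?z)) = exp (- (u * \<rho> * sin \<phi>))" by simp
  ultimately have "exp (- (u * \<rho> * sin \<phi>)) * norm (Pf r s ?z) * norm (1 - exp (- (2 * of_real c * ?z powr of_real \<alpha>)))
      \<le> exp (- (u * \<rho> * sin \<phi>)) * norm (Pf r s ?z) * 2"
    by (intro mult_left_mono) auto
  then show ?thesis by (simp only: Fu_def norm_mult e)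
qed

lemma Fu_cont:
  assumes "0 < \<alpha>" shows "continuous_on quad (Fu \<alpha> c r s u)"
proof -
  have "continuous_on quad (\<lambda>z. z powr of_real \<alpha>)"
    by (rule continuous_on_powr_complex) (use assms in \<open>auto simp: quad_def intro!: continuous_intros\<close>)
  then show ?thesis unfolding Fu_def
    by (intro continuous_intros continuous_on_subset[OF Pf_cont']) (use assms in \<open>auto simp: quad_def\<close>)
qed

lemma Fu_holo:
  assumes "0 < r" "0 < s" "z \<in> U" shows "Fu \<alpha> c r s u field_differentiable (at z)"
proof -
  have "(\<lambda>z. exp (\<i> * of_real u * z) * Pf r s z * (1 - exp (- (2 * of_real c * z powr of_real \<alpha>)))) holomorphic_on U"
    by (intro holomorphic_intros Pf_holo assms) (auto dest: U_not_nonpos)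
  then show ?thesis
    using holomorphic_on_imp_differentiable_at[OF _ open_U assms(3)] unfolding Fu_def by blast
qed

lemma F2_cont:
  assumes "0 < \<alpha>" shows "continuous_on quad (F2 \<alpha>)"
proof -
  have "continuous_on quad (\<lambda>z. z powr of_real \<alpha>)"
    by (rule continuous_on_powr_complex) (use assms in \<open>auto simp: quad_def intro!: continuous_intros\<close>)
  then show ?thesis unfolding F2_def by (intro continuous_intros) (use assms in \<open>auto simp: quad_def\<close>)
qed

lemma F2_holo:
  assumes "z \<in> U" shows "F2 \<alpha> field_differentiable (at z)"
proof -
  have "(\<lambda>z. exp (\<i> * z) * z powr of_real \<alpha>) holomorphic_on U"
    by (intro holomorphic_intros) (auto dest: U_not_nonpos)
  then show ?thesis
    using holomorphic_on_imp_differentiable_at[OF _ open_U assms] unfolding F2_def by blast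
qed

lemma sin_pi8_pos: "0 < sin (pi/8)"
  by (rule sin_gt_zero) auto

lemma ray_cont:
  assumes "continuous_on quad F" "0 \<le> \<phi>" "\<phi> \<le> pi/2"
  shows "continuous_on {0..} (\<lambda>x. F (of_real x * cis \<phi>))"
  by (rule continuous_on_compose2[OF assms(1)]) (use assms cis_quad in \<open>auto intro!: continuous_intros\<close>)

lemma Fu_int_ray0:
  assumes "0 < \<alpha>" "\<alpha> < 2" "0 \<le> c" "0 \<le> r" "0 \<le> s" "0 \<le> u"
  shows "set_integrable lborel {0..} (\<lambda>x. Fu \<alpha> c r s u (of_real x * cis 0))"
proof (rule int_bound)
  show "continuous_on {0..} (\<lambda>x. Fu \<alpha> c r s u (of_real x * cis 0))"
    by (rule ray_cont[OF Fu_cont]) (use assms in auto)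
  show "set_integrable lborel {0..} (\<lambda>x. (2 * (r * s + 4)) * (1 / (1 + x\<^sup>2)))"
    using maj_cauchy by (rule set_integrable_mult_right)
  fix x :: real assume x: "x \<in> {0..}" "x \<noteq> 0"
  have "norm (Fu \<alpha> c r s u (of_real x * cis 0)) \<le> exp (- (u * x * sin 0)) * 2 * norm (Pf r s (of_real x * cis 0))"
    using x assms by (intro Fu_bound_sector) auto
  also have "\<dots> = 2 * norm (Pf r s (of_real x))" by simp
  also have "\<dots> \<le> 2 * ((r * s + 4) / (1 + (norm (complex_of_real x))\<^sup>2))"
    using assms by (intro mult_left_mono Pf_bound3) auto
  finally show "norm (Fu \<alpha> c r s u (of_real x * cis 0)) \<le> (2 * (r * s + 4)) * (1 / (1 + x\<^sup>2))"
    by simp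
qed (auto intro: borel_closed)

lemma Fu_int_ray8:
  assumes "0 < \<alpha>" "\<alpha> < 2" "0 \<le> c" "0 \<le> r" "0 \<le> s" "0 < u"
  shows "set_integrable lborel {0..} (\<lambda>x. Fu \<alpha> c r s u (of_real x * cis (pi/8)))"
proof (rule int_bound)
  show "continuous_on {0..} (\<lambda>x. Fu \<alpha> c r s u (of_real x * cis (pi/8)))"
    by (rule ray_cont[OF Fu_cont]) (use assms in auto)
  have b: "0 < u * sin (pi/8)" using assms sin_pi8_pos by simp
  show "set_integrable lborel {0..} (\<lambda>x. (2 * (r * s)) * (x powr 0 * exp (- ((u * sin (pi/8)) * x))))"
    using maj_gamma[OF b, of 0] by (intro set_integrable_mult_right) auto
  fix x :: real assume x: "x \<in> {0..}" "x \<noteq> 0"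
  have "norm (Fu \<alpha> c r s u (of_real x * cis (pi/8))) \<le> exp (- (u * x * sin (pi/8))) * 2 * norm (Pf r s (of_real x * cis (pi/8)))"
    using x assms by (intro Fu_bound_sector) auto
  also have "\<dots> \<le> exp (- (u * x * sin (pi/8))) * 2 * (r * s)"
    using assms x sin_pi8_pos by (intro mult_left_mono Pf_bound1) auto
  finally show "norm (Fu \<alpha> c r s u (of_real x * cis (pi/8))) \<le> (2 * (r * s)) * (x powr 0 * exp (- ((u * sin (pi/8)) * x)))"
    using x by (simp add: mult_ac)
qed (auto intro: borel_closed)

lemma Fu_rotate:
  assumes "0 < \<alpha>" "\<alpha> < 2" "0 \<le> c" "0 < r" "0 < s" "0 < u"
  shows "(LBINT x:{0..}. Fu \<alpha> c r s u (of_real x * cis 0)) = cis (pi/8) * (LBINT x:{0..}. Fu \<alpha> c r s u (of_real x * cis (pi/8)))"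
proof -
  have "cis 0 * (LBINT x:{0..}. Fu \<alpha> c r s u (of_real x * cis 0)) = cis (pi/8) * (LBINT x:{0..}. Fu \<alpha> c r s u (of_real x * cis (pi/8)))"
  proof (rule sector[where M = "\<lambda>R. 8 / R\<^sup>2"])
    show "continuous_on quad (Fu \<alpha> c r s u)" using assms by (intro Fu_cont)
    show "Fu \<alpha> c r s u field_differentiable at z" if "0 < Re z" "0 < Im z" for z
      using assms that by (intro Fu_holo) (auto simp: U_def)
    show "((\<lambda>R::real. R * (8 / R\<^sup>2)) \<longlongrightarrow> 0) at_top" by real_asymp
    show "set_integrable lborel {0..} (\<lambda>x. Fu \<alpha> c r s u (of_real x * cis 0))"
      using assms by (intro Fu_int_ray0) auto
    show "set_integrable lborel {0..} (\<lambda>x. Fu \<alpha> c r s u (of_real x * cis (pi/8)))"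
      using assms by (intro Fu_int_ray8) auto
    fix R \<phi> :: real assume R: "1 \<le> R" and \<phi>: "0 \<le> \<phi>" "\<phi> \<le> pi/8"
    have "sin \<phi> \<ge> 0" using \<phi> by (intro sin_ge_zero) auto
    then have e: "exp (- (u * R * sin \<phi>)) \<le> 1" using R assms by simp
    have "norm (Fu \<alpha> c r s u (of_real R * cis \<phi>)) \<le> exp (- (u * R * sin \<phi>)) * 2 * norm (Pf r s (of_real R * cis \<phi>))"
      using R \<phi> assms by (intro Fu_bound_sector) auto
    also have "\<dots> \<le> 1 * 2 * (4 / (norm (of_real R * cis \<phi>))\<^sup>2)"
      using R \<phi> assms e \<open>sin \<phi> \<ge> 0\<close> by (intro mult_mono Pf_bound2) auto
    also have "\<dots> = 8 / R\<^sup>2" using R by (simp add: norm_mult)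
    finally show "norm (Fu \<alpha> c r s u (of_real R * cis \<phi>)) \<le> 8 / R\<^sup>2" .
  qed auto
  then show ?thesis by simp
qed

lemma F2_int_ray:
  assumes "0 < \<alpha>" "0 < \<phi>" "\<phi> \<le> pi/2"
  shows "set_integrable lborel {0..} (\<lambda>x. F2 \<alpha> (of_real x * cis \<phi>))"
proof (rule int_bound)
  show "continuous_on {0..} (\<lambda>x. F2 \<alpha> (of_real x * cis \<phi>))"
    by (rule ray_cont[OF F2_cont]) (use assms in auto)
  have b: "0 < sin \<phi>" using assms by (intro sin_gt_zero) auto
  show "set_integrable lborel {0..} (\<lambda>x. x powr \<alpha> * exp (- (sin \<phi> * x)))"
    using maj_gamma[OF b, of \<alpha>] assms by simp
  fix x :: real assume x: "x \<in> {0..}" "x \<noteq> 0"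
  have n: "norm ((of_real x * cis \<phi>) powr of_real \<alpha>) = x powr \<alpha>" using x by (intro sector_powr_norm) auto
  show "norm (F2 \<alpha> (of_real x * cis \<phi>)) \<le> x powr \<alpha> * exp (- (sin \<phi> * x))"
    unfolding F2_def norm_mult n by (simp add: mult_ac)
qed (auto intro: borel_closed)

lemma F2_rotate:
  assumes "0 < \<alpha>"
  shows "cis (pi/8) * (LBINT x:{0..}. F2 \<alpha> (of_real x * cis (pi/8))) = cis (pi/2) * (LBINT x:{0..}. F2 \<alpha> (of_real x * cis (pi/2)))"
proof (rule sector[where M = "\<lambda>R. exp (- (R * sin (pi/8))) * R powr \<alpha>"])
  show "continuous_on quad (F2 \<alpha>)" using assms by (intro F2_cont)
  show "F2 \<alpha> field_differentiable at z" if "0 < Re z" "0 < Im z" for z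
    using that by (intro F2_holo) (auto simp: U_def)
  have lim: "((\<lambda>R. R * (exp (- (R * b)) * R powr \<alpha>)) \<longlongrightarrow> 0) at_top" if "0 < b" for b :: real
    using that by real_asymp
  show "((\<lambda>R. R * (exp (- (R * sin (pi/8))) * R powr \<alpha>)) \<longlongrightarrow> 0) at_top"
    by (rule lim[OF sin_pi8_pos])
  show "set_integrable lborel {0..} (\<lambda>x. F2 \<alpha> (of_real x * cis (pi/8)))"
    using assms by (intro F2_int_ray) auto
  show "set_integrable lborel {0..} (\<lambda>x. F2 \<alpha> (of_real x * cis (pi/2)))"
    using assms by (intro F2_int_ray) auto
  fix R \<phi> :: real assume R: "1 \<le> R" and \<phi>: "pi/8 \<le> \<phi>" "\<phi> \<le> pi/2"
  have "sin (pi/8) \<le> sin \<phi>" using \<phi> by (intro sin_monotone_2pi_le) auto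
  then have "exp (- (R * sin \<phi>)) \<le> exp (- (R * sin (pi/8)))" using R by simp
  moreover have n: "norm ((of_real R * cis \<phi>) powr of_real \<alpha>) = R powr \<alpha>" using R by (intro sector_powr_norm) auto
  ultimately show "norm (F2 \<alpha> (of_real R * cis \<phi>)) \<le> exp (- (R * sin (pi/8))) * R powr \<alpha>"
    unfolding F2_def norm_mult n by (simp add: mult_ac mult_left_mono del: exp_le_cancel_iff)
qed auto

lemma quad_div:
  assumes "0 \<le> x" "0 < v" "0 \<le> \<phi>" "\<phi> \<le> pi/2"
  shows "complex_of_real x * cis \<phi> / complex_of_real v \<in> quad"
proof -
  have "complex_of_real x * cis \<phi> / complex_of_real v = of_real (x / v) * cis \<phi>" by simp
  then show ?thesis using assms cis_quad[of "x / v" \<phi>] by simp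
qed

lemma Fu_scaled_eq:
  fixes x t \<alpha> c r s :: real
  assumes "0 \<le> x" "0 < t" "0 < \<alpha>"
  defines "W \<equiv> 2 * complex_of_real c * of_real (x powr \<alpha>) * cis (\<alpha> * (pi/8))"
  shows "of_real (t powr \<alpha>) * Fu \<alpha> c r s t (of_real (x / t) * cis (pi/8))
       = exp (\<i> * (of_real x * cis (pi/8))) * Pf r s (of_real (x / t) * cis (pi/8)) * (W * E1 (- (W / of_real (t powr \<alpha>))))"
proof -
  let ?T = "complex_of_real (t powr \<alpha>)"
  have T: "?T \<noteq> 0" using assms by simp
  have p: "(of_real (x / t) * cis (pi/8)) powr (of_real \<alpha>) = of_real ((x / t) powr \<alpha>) * cis (\<alpha> * (pi/8))"
    using assms by (intro polar_powr0) auto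
  have q: "(x / t) powr \<alpha> = x powr \<alpha> / t powr \<alpha>" using assms by (simp add: powr_divide)
  have w: "2 * complex_of_real c * (of_real (x / t) * cis (pi/8)) powr (of_real \<alpha>) = W / ?T"
    unfolding p q W_def by (simp add: field_simps)
  have e: "1 - exp (- (W / ?T)) = (W / ?T) * E1 (- (W / ?T))"
    using E1_eq[of "- (W / ?T)"] by (simp add: algebra_simps)
  have ex: "exp (\<i> * of_real t * (of_real (x / t) * cis (pi/8))) = exp (\<i> * (of_real x * cis (pi/8)))"
    using assms by (simp add: field_simps)
  show ?thesis
    unfolding Fu_def w e ex using T by (simp add: field_simps)
qed

lemma main_limit:
  assumes "0 < \<alpha>" "\<alpha> < 2" "0 < c" "0 < r" "0 < s"
  shows "((\<lambda>u. LBINT x:{0..}. of_real (u powr \<alpha>) * Fu \<alpha> c r s u (of_real (x / u) * cis (pi/8)))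
          \<longlongrightarrow> (LBINT x:{0..}. - (2 * complex_of_real (c * r * s)) * F2 \<alpha> (of_real x * cis (pi/8)))) at_top"
proof -
  define \<omega> where "\<omega> = cis (pi/8)"
  define W where "W x = 2 * complex_of_real c * of_real (x powr \<alpha>) * cis (\<alpha> * (pi/8))" for x
  define g where "g u x = of_real (u powr \<alpha>) * Fu \<alpha> c r s u (of_real (x / u) * \<omega>)" for u x
  define sf where "sf u x = indicator {0..} x *\<^sub>R g (max 1 u) x" for u x
  define f where "f x = indicator {0..} x *\<^sub>R (- (2 * complex_of_real (c * r * s)) * F2 \<alpha> (of_real x * \<omega>))" for x
  define w where "w x = indicator {0..} x *\<^sub>R ((2 * c * r * s) * (x powr \<alpha> * exp (- (sin (pi/8) * x))))" for x
  have geq: "g u x = exp (\<i> * (of_real x * \<omega>)) * Pf r s (of_real (x / u) * \<omega>) * (W x * E1 (- (W x / of_real (u powr \<alpha>))))"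
    if "0 \<le> x" "0 < u" for x u
    unfolding g_def W_def \<omega>_def using Fu_scaled_eq[OF that assms(1)] by simp
  have cosa: "0 \<le> cos (\<alpha> * (pi/8))"
  proof -
    have "\<alpha> * (pi/8) \<le> 2 * (pi/8)" using assms by (intro mult_right_mono) auto
    moreover have "0 \<le> \<alpha> * (pi/8)" using assms by simp
    ultimately show ?thesis using pi_gt_zero by (intro cos_ge_zero) linarith+
  qed
  have L: "((\<lambda>u. integral\<^sup>L lborel (sf u)) \<longlongrightarrow> integral\<^sup>L lborel f) at_top"
  proof (rule integral_dominated_convergence_at_top[where w = w])
    show "f \<in> borel_measurable lborel"
      unfolding f_def using borel_measurable_continuous_on_indicator[of "{0..}", OF _ continuous_on_mult[OF continuous_on_const ray_cont[OF F2_cont[OF assms(1)]]]]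
      by (simp add: \<omega>_def borel_closed)
    show "sf u \<in> borel_measurable lborel" for u
    proof -
      define v where "v = max 1 u"
      have v: "0 < v" by (simp add: v_def)
      have c1: "continuous_on {0..} (\<lambda>x. of_real (x / v) * \<omega>)" using v by (intro continuous_intros) auto
      have img: "(\<lambda>x. of_real (x / v) * \<omega>) ` {0..} \<subseteq> quad"
        using v unfolding \<omega>_def by (auto intro!: quad_div)
      have "continuous_on {0..} (\<lambda>x. Fu \<alpha> c r s v (of_real (x / v) * \<omega>))"
        by (rule continuous_on_compose2[OF Fu_cont[OF assms(1)] c1 img])
      then have "continuous_on {0..} (\<lambda>x. of_real (v powr \<alpha>) * Fu \<alpha> c r s v (of_real (x / v) * \<omega>))"
        by (intro continuous_on_mult continuous_on_const)
      with borel_closed[OF closed_atLeast]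
      have m: "(\<lambda>x. indicator {0..} x *\<^sub>R (of_real (v powr \<alpha>) * Fu \<alpha> c r s v (of_real (x / v) * \<omega>))) \<in> borel_measurable borel"
        by (rule borel_measurable_continuous_on_indicator)
      have "sf u = (\<lambda>x. indicator {0..} x *\<^sub>R (of_real (v powr \<alpha>) * Fu \<alpha> c r s v (of_real (x / v) * \<omega>)))"
        by (rule ext) (simp only: sf_def g_def v_def)
      then show ?thesis using m by (simp only: measurable_lborel2)
    qed
    show "integrable lborel w"
    proof -
      have "set_integrable lborel {0..} (\<lambda>x. (2 * c * r * s) * (x powr \<alpha> * exp (- (sin (pi/8) * x))))"
        using maj_gamma[OF sin_pi8_pos, of \<alpha>] assms by (intro set_integrable_mult_right) auto
      then show ?thesis unfolding w_def set_integrable_def .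
    qed
    show "AE x in lborel. ((\<lambda>u. sf u x) \<longlongrightarrow> f x) at_top"
    proof (rule AE_I2)
      fix x :: real
      show "((\<lambda>u. sf u x) \<longlongrightarrow> f x) at_top"
      proof (cases "0 \<le> x")
        case False then show ?thesis by (simp add: sf_def f_def)
      next
        case True
        have ev: "eventually (\<lambda>u. exp (\<i> * (of_real x * \<omega>)) * Pf r s (of_real (x / u) * \<omega>) * (W x * E1 (- (W x / of_real (u powr \<alpha>)))) = sf u x) at_top"
          using eventually_ge_at_top[of "1::real"]
          by eventually_elim (use True in \<open>simp add: sf_def geq\<close>)
        have l1: "((\<lambda>u. Pf r s (of_real (x / u) * \<omega>)) \<longlongrightarrow> Pf r s 0) at_top"
        proof (rule isCont_tendsto_compose[of _ "Pf r s"])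
          show "isCont (Pf r s) 0" using Pf_cont by (simp add: continuous_on_eq_continuous_at)
          have "((\<lambda>u::real. x / u) \<longlongrightarrow> 0) at_top" by real_asymp
          then show "((\<lambda>u. of_real (x / u) * \<omega>) \<longlongrightarrow> 0) at_top"
            by (intro tendsto_mult_left_zero tendsto_of_real_iff[THEN iffD2, of _ 0, simplified]) 
        qed
        have l2: "((\<lambda>u. E1 (- (W x / of_real (u powr \<alpha>)))) \<longlongrightarrow> E1 0) at_top"
        proof (rule isCont_tendsto_compose[of _ E1, OF E1_isCont])
          have "((\<lambda>u::real. inverse (u powr \<alpha>)) \<longlongrightarrow> 0) at_top" using assms by real_asymp
          then have "((\<lambda>u. W x * of_real (inverse (u powr \<alpha>))) \<longlongrightarrow> 0) at_top"
            by (intro tendsto_mult_right_zero tendsto_of_real_iff[THEN iffD2, of _ 0, simplified]) 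
          then have "((\<lambda>u. - (W x * of_real (inverse (u powr \<alpha>)))) \<longlongrightarrow> 0) at_top"
            using tendsto_minus by fastforce
          then show "((\<lambda>u. - (W x / of_real (u powr \<alpha>))) \<longlongrightarrow> 0) at_top"
            by (simp add: divide_inverse)
        qed
        have "((\<lambda>u. exp (\<i> * (of_real x * \<omega>)) * Pf r s (of_real (x / u) * \<omega>) * (W x * E1 (- (W x / of_real (u powr \<alpha>)))))
               \<longlongrightarrow> exp (\<i> * (of_real x * \<omega>)) * Pf r s 0 * (W x * E1 0)) at_top"
          by (intro tendsto_intros l1 l2)
        moreover have "exp (\<i> * (of_real x * \<omega>)) * Pf r s 0 * (W x * E1 0) = f x"
        proof -
          have "(of_real x * \<omega>) powr (of_real \<alpha>) = of_real (x powr \<alpha>) * cis (\<alpha> * (pi/8))"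
            unfolding \<omega>_def using True assms by (intro polar_powr0) auto
          then show ?thesis using True
            by (simp add: f_def F2_def W_def Pf_0 E1_def mult_ac)
        qed
        ultimately show ?thesis using ev by (simp add: tendsto_cong)
      qed
    qed
    show "\<forall>\<^sub>F u in at_top. AE x in lborel. norm (sf u x) \<le> w x"
    proof (intro always_eventually allI AE_I2)
      fix u x :: real
      show "norm (sf u x) \<le> w x"
      proof (cases "0 \<le> x")
        case False then show ?thesis by (simp add: sf_def w_def)
      next
        case True
        define v where "v = max 1 u"
        have v: "0 < v" "1 \<le> v" by (auto simp: v_def)
        have n1: "norm (exp (\<i> * (of_real x * \<omega>))) = exp (- (sin (pi/8) * x))"
          by (simp add: \<omega>_def mult_ac)
        have n2: "norm (Pf r s (of_real (x / v) * \<omega>)) \<le> r * s"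
          using assms True v sin_pi8_pos unfolding \<omega>_def by (intro Pf_bound1) auto
        have n3: "norm (W x) = 2 * c * x powr \<alpha>"
          using assms by (simp add: W_def norm_mult)
        have n4: "norm (E1 (- (W x / of_real (v powr \<alpha>)))) \<le> 1"
        proof (rule E1_bound)
          have "0 \<le> Re (W x / of_real (v powr \<alpha>))"
            using assms cosa v by (simp add: W_def)
          then show "Re (- (W x / of_real (v powr \<alpha>))) \<le> 0" by simp
        qed
        have "norm (sf u x) = exp (- (sin (pi/8) * x)) * norm (Pf r s (of_real (x / v) * \<omega>)) * (2 * c * x powr \<alpha> * norm (E1 (- (W x / of_real (v powr \<alpha>)))))"
          unfolding sf_def v_def[symmetric] using True v
          by (simp add: geq norm_mult n1 n3 \<omega>_def)
        also have "\<dots> \<le> exp (- (sin (pi/8) * x)) * (r * s) * (2 * c * x powr \<alpha> * 1)"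
          using n2 n4 assms by (intro mult_mono mult_left_mono) auto
        also have "\<dots> = w x" using True by (simp add: w_def)
        finally show ?thesis .
      qed
    qed
  qed
  have ev: "eventually (\<lambda>u. integral\<^sup>L lborel (sf u) = (LBINT x:{0..}. of_real (u powr \<alpha>) * Fu \<alpha> c r s u (of_real (x / u) * cis (pi/8)))) at_top"
    using eventually_ge_at_top[of "1::real"]
  proof eventually_elim
    case (elim u)
    then have "sf u = (\<lambda>x. indicator {0..} x *\<^sub>R (of_real (u powr \<alpha>) * Fu \<alpha> c r s u (of_real (x / u) * cis (pi/8))))"
      by (intro ext) (simp add: sf_def g_def \<omega>_def max_def)
    then show ?case by (simp only: set_lebesgue_integral_def)
  qed
  have eq: "integral\<^sup>L lborel f = (LBINT x:{0..}. - (2 * complex_of_real (c * r * s)) * F2 \<alpha> (of_real x * cis (pi/8)))"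
    unfolding set_lebesgue_integral_def by (rule arg_cong[where f="integral\<^sup>L lborel"], rule ext) (simp only: f_def \<omega>_def)
  from Lim_transform_eventually[OF L ev] show ?thesis unfolding eq .
qed

definition Jt :: "real \<Rightarrow> real \<Rightarrow> real \<Rightarrow> real \<Rightarrow> real" where
  "Jt \<alpha> c t \<rho> = (sin (t * \<rho> / 2))\<^sup>2 / \<rho>\<^sup>2 * (1 - exp (- 2 * c * \<rho> powr \<alpha>))"

lemma fACA_eq:
  assumes "0 < t" shows "fACA \<alpha> c a t = 4 / (a * pi) * (LBINT \<rho>:{0<..}. Jt \<alpha> c t \<rho>)"
proof -
  let ?g = "\<lambda>u. (sin (u / 2))\<^sup>2 / u\<^sup>2 * (1 - exp (- 2 * c * (u / t) powr \<alpha>))"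
  have "(LBINT u:{0<..}. ?g u) = integral\<^sup>L lborel (\<lambda>u. indicator {0<..} u *\<^sub>R ?g u)"
    by (simp add: set_lebesgue_integral_def)
  also have "\<dots> = \<bar>t\<bar> *\<^sub>R integral\<^sup>L lborel (\<lambda>\<rho>. indicator {0<..} (0 + t * \<rho>) *\<^sub>R ?g (0 + t * \<rho>))"
    by (rule lborel_integral_real_affine) (use assms in simp)
  also have "(\<lambda>\<rho>. indicator {0<..} (0 + t * \<rho>) *\<^sub>R ?g (0 + t * \<rho>)) = (\<lambda>\<rho>. (1 / t\<^sup>2) * (indicator {0<..} \<rho> *\<^sub>R Jt \<alpha> c t \<rho>))"
  proof (rule ext)
    fix \<rho> :: real
    show "indicator {0<..} (0 + t * \<rho>) *\<^sub>R ?g (0 + t * \<rho>) = (1 / t\<^sup>2) * (indicator {0<..} \<rho> *\<^sub>R Jt \<alpha> c t \<rho>)"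
    proof (cases "0 < \<rho>")
      case True
      have "t * \<rho> / t = \<rho>" using assms by simp
      then show ?thesis using True assms by (simp add: Jt_def zero_less_mult_iff power_mult_distrib field_simps)
    next
      case False
      then have "\<not> 0 < t * \<rho>" using assms by (simp add: zero_less_mult_iff)
      then show ?thesis using False by simp
    qed
  qed
  also have "\<bar>t\<bar> *\<^sub>R integral\<^sup>L lborel (\<lambda>\<rho>. (1 / t\<^sup>2) * (indicator {0<..} \<rho> *\<^sub>R Jt \<alpha> c t \<rho>))
      = t * (1 / t\<^sup>2) * (LBINT \<rho>:{0<..}. Jt \<alpha> c t \<rho>)"
    using assms by (simp add: set_lebesgue_integral_def)
  finally have "(LBINT u:{0<..}. ?g u) = t * (1 / t\<^sup>2) * (LBINT \<rho>:{0<..}. Jt \<alpha> c t \<rho>)" .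
  then show ?thesis using assms unfolding fACA_def by (simp add: power2_eq_square field_simps)
qed

lemma Jt_int:
  assumes "0 \<le> c" shows "set_integrable lborel {0<..} (Jt \<alpha> c t)"
proof (rule int_bound)
  show "{(0::real)<..} \<in> sets borel" by (intro borel_open open_greaterThan)
  show "continuous_on {0<..} (Jt \<alpha> c t)"
    unfolding Jt_def by (intro continuous_intros) auto
  have "set_integrable lborel {0<..} (\<lambda>x::real. 1 / (1 + x\<^sup>2))"
    by (rule set_integrable_subset[OF maj_cauchy]) auto
  then show "set_integrable lborel {0<..} (\<lambda>x. (t\<^sup>2 / 4 + 1) * (1 / (1 + x\<^sup>2)))"
    by (rule set_integrable_mult_right)
  fix x :: real assume x: "x \<in> {0<..}" "x \<noteq> 0"
  define S where "S = (sin (t * x / 2))\<^sup>2"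
  define m where "m = 1 - exp (- 2 * c * x powr \<alpha>)"
  have m: "0 \<le> m" "m \<le> 1" using assms x by (auto simp: m_def)
  have S: "0 \<le> S" "S \<le> 1" by (auto simp: S_def abs_square_le_1)
  have "\<bar>sin (t * x / 2)\<bar> \<le> \<bar>t * x / 2\<bar>" by (rule abs_sin_x_le_abs_x)
  then have "S \<le> (t * x / 2)\<^sup>2" unfolding S_def by (metis abs_ge_zero power2_abs power_mono)
  then have S2: "S / x\<^sup>2 \<le> t\<^sup>2 / 4" using x by (simp add: field_simps power2_eq_square)
  have "S / x\<^sup>2 * m * (1 + x\<^sup>2) = S / x\<^sup>2 * m + S * m" using x by (simp add: field_simps)
  also have "\<dots> \<le> S / x\<^sup>2 * 1 + S * 1" using m S x by (intro add_mono mult_left_mono) auto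
  also have "\<dots> \<le> t\<^sup>2 / 4 + 1" using S2 S by (simp only: mult_1_right)
  finally have "S / x\<^sup>2 * m \<le> (t\<^sup>2 / 4 + 1) * (1 / (1 + x\<^sup>2))"
    by (simp add: field_simps add_pos_nonneg)
  moreover have "0 \<le> S / x\<^sup>2 * m" using S m by simp
  ultimately show "norm (Jt \<alpha> c t x) \<le> (t\<^sup>2 / 4 + 1) * (1 / (1 + x\<^sup>2))"
    unfolding Jt_def S_def[symmetric] m_def[symmetric] by simp
qed

lemma Re_Fu_real:
  assumes "0 < \<rho>"
  shows "Re (Fu \<alpha> c r s u (of_real \<rho>)) =
    (cos ((u+r+s)*\<rho>) - cos ((u+r)*\<rho>) - cos ((u+s)*\<rho>) + cos (u*\<rho>)) / \<rho>\<^sup>2 * (1 - exp (- 2 * c * \<rho> powr \<alpha>))"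
proof -
  have nz: "complex_of_real \<rho> \<noteq> 0" using assms by simp
  have pw: "(complex_of_real \<rho>) powr (of_real \<alpha>) = of_real (\<rho> powr \<alpha>)" using assms by (simp add: powr_of_real)
  have K: "1 - exp (- (2 * complex_of_real c * of_real (\<rho> powr \<alpha>))) = of_real (1 - exp (- 2 * c * \<rho> powr \<alpha>))"
    by (simp flip: exp_of_real)
  have ci: "exp (\<i> * complex_of_real b * of_real \<rho>) = cis (b * \<rho>)" for b
    by (simp add: cis_conv_exp mult.assoc)
  have m: "cis (u*\<rho>) * ((cis (r*\<rho>) - 1) * (cis (s*\<rho>) - 1)) = cis ((u+r+s)*\<rho>) - cis ((u+r)*\<rho>) - cis ((u+s)*\<rho>) + cis (u*\<rho>)"
    by (simp add: algebra_simps cis_mult)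
  have "Fu \<alpha> c r s u (of_real \<rho>) = (cis (u*\<rho>) * ((cis (r*\<rho>) - 1) * (cis (s*\<rho>) - 1))) / of_real (\<rho>\<^sup>2) * of_real (1 - exp (- 2 * c * \<rho> powr \<alpha>))"
    using assms unfolding Fu_def Pf_eq[OF nz] pw K ci
    by (simp add: field_simps)
  also have "\<dots> = (cis ((u+r+s)*\<rho>) - cis ((u+r)*\<rho>) - cis ((u+s)*\<rho>) + cis (u*\<rho>)) / of_real (\<rho>\<^sup>2) * of_real (1 - exp (- 2 * c * \<rho> powr \<alpha>))"
    unfolding m ..
  finally show ?thesis by simp
qed

lemma lin4:
  fixes A B C D K x :: real
  shows "(1 - A) / 2 / x * K - (1 - B) / 2 / x * K - (1 - C) / 2 / x * K + (1 - D) / 2 / x * K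
    = - (1/2) * ((A - B - C + D) / x * K)"
proof -
  have q: "y / 2 / x * K = y * (K / (2 * x))" for y
    by simp
  have r: "- (1/2) * (Z / x * K) = - (Z / 2 / x * K)" for Z
    by simp
  show ?thesis unfolding r q by algebra
qed

lemma Jt_comb:
  assumes "0 < \<rho>"
  shows "Jt \<alpha> c (u+r+s) \<rho> - Jt \<alpha> c (u+r) \<rho> - Jt \<alpha> c (u+s) \<rho> + Jt \<alpha> c u \<rho> = - (1/2) * Re (Fu \<alpha> c r s u (of_real \<rho>))"
proof -
  have sq: "(sin (t * \<rho> / 2))\<^sup>2 = (1 - cos (t * \<rho>)) / 2" for t
    using cos_double_sin[of "t * \<rho> / 2"] by simp
  show ?thesis unfolding Re_Fu_real[OF assms] Jt_def sq
    by (rule lin4)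
qed

lemma Fu_zero: "Fu \<alpha> c r s u 0 = 0"
  by (simp add: Fu_def)

lemma D_eq:
  assumes "0 < u" "0 < \<alpha>" "\<alpha> < 2" "0 < c" "0 < r" "0 < s"
  shows "fACA \<alpha> c a (u+r+s) - fACA \<alpha> c a (u+r) - fACA \<alpha> c a (u+s) + fACA \<alpha> c a u
     = - (2 / (a * pi)) * Re (LBINT x:{0..}. Fu \<alpha> c r s u (of_real x * cis 0))"
proof -
  have pos: "0 < u+r+s" "0 < u+r" "0 < u+s" using assms by auto
  have i: "set_integrable lborel {0<..} (Jt \<alpha> c t)" for t using assms by (intro Jt_int) auto
  have "fACA \<alpha> c a (u+r+s) - fACA \<alpha> c a (u+r) - fACA \<alpha> c a (u+s) + fACA \<alpha> c a u
     = 4 / (a * pi) * ((LBINT \<rho>:{0<..}. Jt \<alpha> c (u+r+s) \<rho>) - (LBINT \<rho>:{0<..}. Jt \<alpha> c (u+r) \<rho>)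
         - (LBINT \<rho>:{0<..}. Jt \<alpha> c (u+s) \<rho>) + (LBINT \<rho>:{0<..}. Jt \<alpha> c u \<rho>))"
    unfolding fACA_eq[OF pos(1)] fACA_eq[OF pos(2)] fACA_eq[OF pos(3)] fACA_eq[OF assms(1)]
    by (simp add: algebra_simps)
  also have "(LBINT \<rho>:{0<..}. Jt \<alpha> c (u+r+s) \<rho>) - (LBINT \<rho>:{0<..}. Jt \<alpha> c (u+r) \<rho>)
         - (LBINT \<rho>:{0<..}. Jt \<alpha> c (u+s) \<rho>) + (LBINT \<rho>:{0<..}. Jt \<alpha> c u \<rho>)
      = (LBINT \<rho>:{0<..}. Jt \<alpha> c (u+r+s) \<rho> - Jt \<alpha> c (u+r) \<rho> - Jt \<alpha> c (u+s) \<rho> + Jt \<alpha> c u \<rho>)"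
  proof -
    have a1: "set_integrable lborel {0<..} (\<lambda>\<rho>. Jt \<alpha> c (u+r+s) \<rho> - Jt \<alpha> c (u+r) \<rho>)"
      using i[of "u+r+s"] i[of "u+r"] by (rule set_integral_diff(1))
    have a2: "set_integrable lborel {0<..} (\<lambda>\<rho>. Jt \<alpha> c (u+r+s) \<rho> - Jt \<alpha> c (u+r) \<rho> - Jt \<alpha> c (u+s) \<rho>)"
      using a1 i[of "u+s"] by (rule set_integral_diff(1))
    show ?thesis
      using set_integral_add(2)[OF a2 i[of u]] set_integral_diff(2)[OF a1 i[of "u+s"]] set_integral_diff(2)[OF i i, of "u+r+s" "u+r"]
      by simp
  qed
  also have "(LBINT \<rho>:{0<..}. Jt \<alpha> c (u+r+s) \<rho> - Jt \<alpha> c (u+r) \<rho> - Jt \<alpha> c (u+s) \<rho> + Jt \<alpha> c u \<rho>)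
      = (LBINT \<rho>:{0<..}. - (1/2) * Re (Fu \<alpha> c r s u (of_real \<rho>)))"
    by (rule set_lebesgue_integral_cong) (auto simp: Jt_comb)
  also have "\<dots> = - (1/2) * (LBINT \<rho>:{0<..}. Re (Fu \<alpha> c r s u (of_real \<rho>)))"
    by (rule set_integral_mult_right)
  also have "(LBINT \<rho>:{0<..}. Re (Fu \<alpha> c r s u (of_real \<rho>))) = Re (LBINT x:{0..}. Fu \<alpha> c r s u (of_real x * cis 0))"
  proof -
    have int: "integrable lborel (\<lambda>x. indicator {0..} x *\<^sub>R Fu \<alpha> c r s u (of_real x * cis 0))"
      using Fu_int_ray0[of \<alpha> c r s u] assms unfolding set_integrable_def by auto
    have e1: "(\<lambda>\<rho>. indicator {0<..} \<rho> *\<^sub>R Re (Fu \<alpha> c r s u (of_real \<rho>))) = (\<lambda>x. Re (indicator {0..} x *\<^sub>R Fu \<alpha> c r s u (of_real x * cis 0)))"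
      by (rule ext) (auto simp: indicator_def Fu_zero)
    show ?thesis unfolding set_lebesgue_integral_def e1
      by (rule integral_bounded_linear[OF bounded_linear_Re int])
  qed
  finally show ?thesis by simp
qed

lemma scale_int:
  fixes H :: "real \<Rightarrow> complex"
  assumes "0 < u"
  shows "(LBINT x:{0..}. H x) = of_real (1/u) * (LBINT x:{0..}. H (x / u))"
proof -
  have "(LBINT x:{0..}. H x) = \<bar>1/u\<bar> *\<^sub>R integral\<^sup>L lborel (\<lambda>x. indicator {0..} (0 + (1/u) * x) *\<^sub>R H (0 + (1/u) * x))"
    unfolding set_lebesgue_integral_def by (rule lborel_integral_real_affine) (use assms in simp)
  also have "(\<lambda>x. indicator {0..} (0 + (1/u) * x) *\<^sub>R H (0 + (1/u) * x)) = (\<lambda>x. indicator {0..} x *\<^sub>R H (x / u))"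
    using assms by (intro ext) (simp add: indicator_def zero_le_divide_iff)
  finally show ?thesis using assms by (simp add: set_lebesgue_integral_def scaleR_conv_of_real)
qed

lemma F2_half:
  assumes "0 \<le> x" "0 < \<alpha>"
  shows "F2 \<alpha> (of_real x * cis (pi/2)) = cis (\<alpha> * (pi/2)) * of_real (x powr \<alpha> * exp (- x))"
proof -
  have p: "(of_real x * cis (pi/2)) powr of_real \<alpha> = of_real (x powr \<alpha>) * cis (\<alpha> * (pi/2))"
    using assms by (intro polar_powr0) auto
  have "\<i> * (complex_of_real x * cis (pi/2)) = complex_of_real x * (\<i> * \<i>)" by (simp add: algebra_simps)
  then have "\<i> * (complex_of_real x * cis (pi/2)) = complex_of_real (- x)" by simp
  then have "exp (\<i> * (complex_of_real x * cis (pi/2))) = of_real (exp (- x))"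
    by (simp only: exp_of_real)
  then show ?thesis unfolding F2_def p by (simp add: mult_ac)
qed

lemma G_pos:
  fixes \<alpha> :: real
  assumes "0 < \<alpha>"
  shows "0 < (LBINT x:{0..}. x powr \<alpha> * exp (- x))"
proof -
  have i: "set_integrable lborel {0..} (\<lambda>x. x powr \<alpha> * exp (- x))"
    using maj_gamma[of 1 \<alpha>] assms by simp
  have "((\<lambda>t. t powr (\<alpha> + 1 - 1) / exp t) has_integral Gamma (\<alpha> + 1)) {0..}"
    using assms by (intro Gamma_integral_real) simp
  then have "((\<lambda>t. t powr \<alpha> * exp (- t)) has_integral Gamma (\<alpha> + 1)) {0..}"
    by (simp add: exp_minus divide_inverse)
  then have "integral {0..} (\<lambda>t. t powr \<alpha> * exp (- t)) = Gamma (\<alpha> + 1)" by (rule integral_unique)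
  moreover have "(LBINT x:{0..}. x powr \<alpha> * exp (- x)) = integral {0..} (\<lambda>t. t powr \<alpha> * exp (- t))"
    by (rule set_borel_integral_eq_integral(2)[OF i])
  ultimately show ?thesis using assms by simp
qed

lemma Re_ofr: "Re (complex_of_real x * z) = x * Re z"
  by simp

theorem proposition3p15:
  fixes \<alpha> c a s r :: real
  assumes "0 < \<alpha>" "\<alpha> < 2" "0 < c" "0 < a" "0 < s" "0 < r"
  shows "\<exists>k::real. k \<noteq> 0 \<and>
    (\<lambda>u. covG \<alpha> c a s (r + s + u) - covG \<alpha> c a s (s + u)
          - covG \<alpha> c a 0 (r + s + u) + covG \<alpha> c a 0 (s + u))
    \<sim>[at_top] (\<lambda>u. k * u powr (- (\<alpha> + 1)))"
proof -
  define f where "f = fACA \<alpha> c a"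
  define E where "E u = covG \<alpha> c a s (r + s + u) - covG \<alpha> c a s (s + u)
          - covG \<alpha> c a 0 (r + s + u) + covG \<alpha> c a 0 (s + u)" for u
  define \<omega> where "\<omega> = cis (pi/8)"
  define I where "I u = (LBINT x:{0..}. of_real (u powr \<alpha>) * Fu \<alpha> c r s u (of_real (x / u) * \<omega>))" for u
  define L2 where "L2 = (LBINT x:{0..}. F2 \<alpha> (of_real x * \<omega>))"
  define G where "G = (LBINT x:{0..}. x powr \<alpha> * exp (- x))"
  define k where "k = - (1 / (a * pi)) * Re (\<omega> * (- (2 * complex_of_real (c * r * s)) * L2))"
  have f0: "f 0 = 0" by (simp add: f_def fACA_def)
  have E_eq: "E u = (f (u+r+s) - f (u+r) - f (u+s) + f u) / 2" if "0 < u" for u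
  proof -
    have a1: "\<bar>s - (r + s + u)\<bar> = u + r" using that assms by simp
    have a2: "\<bar>s - (s + u)\<bar> = u" using that by simp
    have a3: "\<bar>0 - (r + s + u)\<bar> = r + s + u" using that assms by simp
    have a4: "\<bar>0 - (s + u)\<bar> = s + u" using that assms by simp
    have b1: "r + s + u = u + r + s" and b2: "s + u = u + s" by simp_all
    show ?thesis unfolding E_def covG_def f_def[symmetric] a1 a2 a3 a4 f0 unfolding b1 b2 by (simp add: field_simps)
  qed
  have key: "E u * u powr (\<alpha> + 1) = - (1 / (a * pi)) * Re (\<omega> * I u)" if "1 \<le> u" for u
  proof -
    have u: "0 < u" using that by simp
    have d: "f (u+r+s) - f (u+r) - f (u+s) + f u = - (2 / (a * pi)) * Re (LBINT x:{0..}. Fu \<alpha> c r s u (of_real x * cis 0))"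
      unfolding f_def using D_eq[OF u assms(1,2,3,6,5)] .
    have rot: "(LBINT x:{0..}. Fu \<alpha> c r s u (of_real x * cis 0)) = \<omega> * (LBINT x:{0..}. Fu \<alpha> c r s u (of_real x * \<omega>))"
      unfolding \<omega>_def using Fu_rotate[of \<alpha> c r s u] assms u by simp
    define J where "J = (LBINT x:{0..}. Fu \<alpha> c r s u (of_real (x / u) * \<omega>))"
    have sc: "(LBINT x:{0..}. Fu \<alpha> c r s u (of_real x * \<omega>)) = of_real (1 / u) * J"
      unfolding J_def by (rule scale_int[OF u])
    have Iu: "I u = of_real (u powr \<alpha>) * J"
      unfolding I_def J_def by (rule set_integral_mult_right)
    have pw: "u powr (\<alpha> + 1) = u powr \<alpha> * u" using u by (simp add: powr_add)
    have m1: "\<omega> * (of_real (1 / u) * J) = of_real (1 / u) * (\<omega> * J)" by (simp add: mult_ac)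
    have m2: "\<omega> * I u = of_real (u powr \<alpha>) * (\<omega> * J)" unfolding Iu by (simp add: mult_ac)
    define X where "X = Re (\<omega> * J)"
    have "E u * u powr (\<alpha> + 1) = (- (2 / (a * pi)) * Re (\<omega> * (of_real (1 / u) * J))) / 2 * (u powr \<alpha> * u)"
      unfolding E_eq[OF u] d rot sc pw ..
    also have "\<dots> = (- (2 / (a * pi)) * ((1 / u) * X)) / 2 * (u powr \<alpha> * u)"
      unfolding m1 Re_ofr X_def ..
    also have "\<dots> = - (1 / (a * pi)) * (u powr \<alpha> * X)"
      using u by (simp add: field_simps)
    also have "\<dots> = - (1 / (a * pi)) * Re (\<omega> * I u)"
      unfolding m2 Re_ofr X_def ..
    finally show ?thesis .
  qed
  have ml: "(I \<longlongrightarrow> - (2 * complex_of_real (c * r * s)) * L2) at_top"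
  proof -
    have eqL: "(LBINT x:{0..}. - (2 * complex_of_real (c * r * s)) * F2 \<alpha> (of_real x * cis (pi/8))) = - (2 * complex_of_real (c * r * s)) * L2"
      unfolding L2_def \<omega>_def by (rule set_integral_mult_right)
    have "I = (\<lambda>u. LBINT x:{0..}. of_real (u powr \<alpha>) * Fu \<alpha> c r s u (of_real (x / u) * cis (pi/8)))"
      unfolding I_def \<omega>_def ..
    then show ?thesis using main_limit[OF assms(1,2,3,6,5)] unfolding eqL by simp
  qed
  have lim: "((\<lambda>u. - (1 / (a * pi)) * Re (\<omega> * I u)) \<longlongrightarrow> k) at_top"
    unfolding k_def by (intro tendsto_intros ml)
  have ev: "eventually (\<lambda>u. - (1 / (a * pi)) * Re (\<omega> * I u) = E u / u powr (- (\<alpha> + 1))) at_top"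
    using eventually_ge_at_top[of "1::real"]
  proof eventually_elim
    case (elim u)
    then have "E u / u powr (- (\<alpha> + 1)) = E u * u powr (\<alpha> + 1)"
      by (simp only: powr_minus divide_inverse inverse_inverse_eq)
    then show ?case using key[OF elim] by simp
  qed
  have lim2: "((\<lambda>u. E u / u powr (- (\<alpha> + 1))) \<longlongrightarrow> k) at_top"
    using Lim_transform_eventually[OF lim ev] .
  have knz: "k \<noteq> 0"
  proof -
    have "\<omega> * L2 = cis (pi/2) * (LBINT x:{0..}. F2 \<alpha> (of_real x * cis (pi/2)))"
      unfolding \<omega>_def L2_def by (rule F2_rotate[OF assms(1)])
    also have "(LBINT x:{0..}. F2 \<alpha> (of_real x * cis (pi/2))) = (LBINT x:{0..}. cis (\<alpha> * (pi/2)) * complex_of_real (x powr \<alpha> * exp (- x)))"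
    proof (rule set_lebesgue_integral_cong)
      show "{0::real..} \<in> sets lborel" by simp
      show "\<forall>x. x \<in> {0..} \<longrightarrow> F2 \<alpha> (of_real x * cis (pi/2)) = cis (\<alpha> * (pi/2)) * complex_of_real (x powr \<alpha> * exp (- x))"
      proof (intro allI impI)
        fix x :: real assume "x \<in> {0..}"
        then show "F2 \<alpha> (of_real x * cis (pi/2)) = cis (\<alpha> * (pi/2)) * complex_of_real (x powr \<alpha> * exp (- x))"
          using assms(1) by (intro F2_half) auto
      qed
    qed
    also have "\<dots> = cis (\<alpha> * (pi/2)) * (LBINT x:{0..}. complex_of_real (x powr \<alpha> * exp (- x)))"
      by (rule set_integral_mult_right)
    also have "(LBINT x:{0..}. complex_of_real (x powr \<alpha> * exp (- x))) = complex_of_real G"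
    proof -
      have "(\<lambda>x. indicator {0..} x *\<^sub>R complex_of_real (x powr \<alpha> * exp (- x))) = (\<lambda>x. complex_of_real (indicator {0..} x *\<^sub>R (x powr \<alpha> * exp (- x))))"
        by (rule ext) (simp add: scaleR_conv_of_real)
      then show ?thesis unfolding G_def set_lebesgue_integral_def by (simp only: integral_complex_of_real)
    qed
    finally have wL: "\<omega> * L2 = cis (pi/2) * (cis (\<alpha> * (pi/2)) * complex_of_real G)" .
    have r1: "Re (\<omega> * L2) = - (G * sin (\<alpha> * (pi/2)))" unfolding wL by simp
    have r2: "\<omega> * (- (2 * complex_of_real (c * r * s)) * L2) = complex_of_real (- (2 * c * r * s)) * (\<omega> * L2)"
      by (simp add: algebra_simps)
    have "k = - (1 / (a * pi)) * (- (2 * c * r * s) * - (G * sin (\<alpha> * (pi/2))))"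
      unfolding k_def r2 Re_ofr r1 ..
    then have kk: "k = - (2 * c * r * s / (a * pi)) * G * sin (\<alpha> * (pi/2))" by (simp add: field_simps)
    have "0 < sin (\<alpha> * (pi/2))" using assms by (intro sin_gt_zero) auto
    moreover have "0 < G" unfolding G_def using G_pos[OF assms(1)] .
    ultimately show ?thesis unfolding kk using assms by simp
  qed
  have "E \<sim>[at_top] (\<lambda>u. k * u powr (- (\<alpha> + 1)))"
    by (rule asymp_equivI'_const[OF lim2 knz])
  then show ?thesis using knz unfolding E_def by blast
qed

end
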